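(* Let $\mu$ be a probability measure on $\mathbb{R}$ admitting a density with respect to Lebesgue measure. Let $N\ge 2$, $p_1,\dots,p_N\ge1$, $p=\sum_i p_i$, and let $\mathbf{C}=\mathbf{I}_p-\mathbf{K}$, where $\mathbf{K}$ is the $p\times p$ block matrix (blocks of sizes $p_i\times p_j$) with zero diagonal blocks and off-diagonal blocks $\mathbf{C}_{i,j}\in\mathbb{R}^{p_i\times p_j}$, $i\ne j$. If all entries of the off-diagonal blocks $\mathbf{C}_{i,j}$ are sampled independently at random from $\mu$, then $\mathbf{C}$ is invertible with probability $1$. *)

theory Defs
  imports "HOL-Probability.Probability" "Jordan_Normal_Form.Determinant"
begin

text \<open>Block sizes p 0, ..., p (N-1); block i occupies the indices
  block_start p i ..< block_start p (Suc i) of {0 ..< block_start p N}.\<close>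
definition block_start :: "(nat \<Rightarrow> nat) \<Rightarrow> nat \<Rightarrow> nat" where
  "block_start p i = (\<Sum>j<i. p j)"

definition offdiag_pos :: "nat \<Rightarrow> (nat \<Rightarrow> nat) \<Rightarrow> (nat \<times> nat) set" where
  "offdiag_pos N p = {(k, l). \<exists>i<N. \<exists>j<N. i \<noteq> j \<and>
      k \<in> {block_start p i ..< block_start p (Suc i)} \<and>
      l \<in> {block_start p j ..< block_start p (Suc j)}}"

definition block_K :: "nat \<Rightarrow> (nat \<Rightarrow> nat) \<Rightarrow> (nat \<times> nat \<Rightarrow> real) \<Rightarrow> real mat" where
  "block_K N p x = mat (block_start p N) (block_start p N)
      (\<lambda>(k, l). if (k, l) \<in> offdiag_pos N p then x (k, l) else 0)"

definition block_C :: "nat \<Rightarrow> (nat \<Rightarrow> nat) \<Rightarrow> (nat \<times> nat \<Rightarrow> real) \<Rightarrow> real mat" where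
  "block_C N p x = 1\<^sub>m (block_start p N) - block_K N p x"

end

theory Submission
  imports Defs
begin

lemma restrict_meas:
  fixes g :: "('i \<Rightarrow> real) \<Rightarrow> real"
  assumes "g \<in> borel_measurable (PiM (insert i I) (\<lambda>_. M))" "i \<notin> I" "space M = UNIV"
  shows "(\<lambda>x. g (x(i:=t))) \<in> borel_measurable (PiM I (\<lambda>_. M))"
proof -
  have "(\<lambda>x. x(i:=t)) \<in> measurable (PiM I (\<lambda>_. M)) (PiM (insert i I) (\<lambda>_. M))"
  proof -
    have "(\<lambda>x j. (\<lambda>j x. if j = i then t else x j) j x) \<in> measurable (PiM I (\<lambda>_. M)) (PiM (insert i I) (\<lambda>_. M))"
    proof (rule measurable_PiM_single')
      fix j assume "j \<in> insert i I"
      then show "(\<lambda>x. if j = i then t else x j) \<in> measurable (PiM I (\<lambda>_. M)) M"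
        using assms(3) by (cases "j = i") auto
    next
      show "(\<lambda>x j. if j = i then t else x j) \<in> space (PiM I (\<lambda>_. M)) \<rightarrow> (\<Pi>\<^sub>E j\<in>insert i I. space M)"
        using assms(2,3) by (auto simp: space_PiM PiE_def extensional_def)
    qed
    then show ?thesis unfolding fun_upd_def by simp
  qed
  then show ?thesis using assms(1) by (rule measurable_compose)
qed

lemma main:
  fixes M :: "real measure"
  assumes M: "prob_space M" "sets M = sets borel" "\<And>a. emeasure M {a} = 0"
    and fin: "finite I"
  shows "\<forall>g :: ('i \<Rightarrow> real) \<Rightarrow> real. (\<forall>x y. (\<forall>i\<in>I. x i = y i) \<longrightarrow> g x = g y) \<longrightarrow>
     (\<forall>i\<in>I. \<forall>x t. g (x(i:=t)) = g (x(i:=0)) + t * (g (x(i:=1)) - g (x(i:=0)))) \<longrightarrow>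
     g \<in> borel_measurable (PiM I (\<lambda>_. M)) \<longrightarrow> (\<exists>x. g x \<noteq> 0) \<longrightarrow>
     (AE x in PiM I (\<lambda>_. M). g x \<noteq> 0)"
  using fin
proof (induction I rule: finite_induct)
  case empty
  show ?case
  proof (intro allI impI)
    fix g :: "('i \<Rightarrow> real) \<Rightarrow> real"
    assume d: "\<forall>x y. (\<forall>i\<in>{}. x i = y i) \<longrightarrow> g x = g y" and "\<exists>x. g x \<noteq> 0"
    then have "\<forall>x. g x \<noteq> 0" by (metis empty_iff)
    then show "AE x in PiM {} (\<lambda>_. M). g x \<noteq> 0" by auto
  qed
next
  case (insert i I)
  have spM: "space M = UNIV" using sets_eq_imp_space_eq[OF M(2)] by simp
  interpret product_prob_space "\<lambda>_. M" I
    by (rule product_prob_spaceI) (rule M(1))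
  show ?case
  proof (intro allI impI)
    fix g :: "('i \<Rightarrow> real) \<Rightarrow> real"
    assume dep: "\<forall>x y. (\<forall>j\<in>insert i I. x j = y j) \<longrightarrow> g x = g y"
      and aff: "\<forall>j\<in>insert i I. \<forall>x t. g (x(j:=t)) = g (x(j:=0)) + t * (g (x(j:=1)) - g (x(j:=0)))"
      and meas: "g \<in> borel_measurable (PiM (insert i I) (\<lambda>_. M))"
      and nz: "\<exists>x. g x \<noteq> 0"
    define ga where "ga = (\<lambda>x. g (x(i:=0)))"
    define gb where "gb = (\<lambda>x. g (x(i:=1)) - g (x(i:=0)))"
    have affi: "\<And>j x t. j \<in> insert i I \<Longrightarrow> g (x(j:=t)) = g (x(j:=0)) + t * (g (x(j:=1)) - g (x(j:=0)))"
      using aff by blast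
    have depI: "\<And>x y. (\<And>j. j \<in> insert i I \<Longrightarrow> x j = y j) \<Longrightarrow> g x = g y"
      using dep by blast
    have gsplit: "g (x(i:=t)) = ga x + t * gb x" for x t
      unfolding ga_def gb_def by (rule affi) simp
    have gam: "ga \<in> borel_measurable (PiM I (\<lambda>_. M))"
      unfolding ga_def using restrict_meas[OF meas insert(2) spM] .
    have gbm: "gb \<in> borel_measurable (PiM I (\<lambda>_. M))"
      unfolding gb_def using restrict_meas[OF meas insert(2) spM] by measurable
    have depc: "g (x(i:=c)) = g (y(i:=c))" if "\<forall>j\<in>I. x j = y j" for x y c
      by (rule depI) (use that in auto)
    have gadep: "\<forall>x y. (\<forall>j\<in>I. x j = y j) \<longrightarrow> ga x = ga y"
      unfolding ga_def using depc by blast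
    have gbdep: "\<forall>x y. (\<forall>j\<in>I. x j = y j) \<longrightarrow> gb x = gb y"
      unfolding gb_def using depc by metis
    have gaaff: "\<forall>j\<in>I. \<forall>x t. ga (x(j:=t)) = ga (x(j:=0)) + t * (ga (x(j:=1)) - ga (x(j:=0)))"
    proof (intro ballI allI)
      fix j x t assume j: "j \<in> I"
      then have ji: "j \<noteq> i" using insert(2) by auto
      have "g ((x(i:=0))(j:=t)) = g ((x(i:=0))(j:=0)) + t * (g ((x(i:=0))(j:=1)) - g ((x(i:=0))(j:=0)))"
        by (rule affi) (simp add: j)
      then show "ga (x(j:=t)) = ga (x(j:=0)) + t * (ga (x(j:=1)) - ga (x(j:=0)))"
        unfolding ga_def by (simp only: fun_upd_twist[OF ji])
    qed
    have gbaff: "\<forall>j\<in>I. \<forall>x t. gb (x(j:=t)) = gb (x(j:=0)) + t * (gb (x(j:=1)) - gb (x(j:=0)))"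
    proof (intro ballI allI)
      fix j x t assume j: "j \<in> I"
      then have ji: "j \<noteq> i" using insert(2) by auto
      have "g ((x(i:=c))(j:=t)) = g ((x(i:=c))(j:=0)) + t * (g ((x(i:=c))(j:=1)) - g ((x(i:=c))(j:=0)))" for c
        by (rule affi) (simp add: j)
      then have e: "g (x(j:=t, i:=c)) = g (x(j:=0, i:=c)) + t * (g (x(j:=1, i:=c)) - g (x(j:=0, i:=c)))" for c
        by (simp only: fun_upd_twist[OF ji])
      show "gb (x(j:=t)) = gb (x(j:=0)) + t * (gb (x(j:=1)) - gb (x(j:=0)))"
        unfolding gb_def e[of 0] e[of 1] by (simp add: algebra_simps)
    qed
    obtain x0 where "g x0 \<noteq> 0" using nz by auto
    then have "ga x0 \<noteq> 0 \<or> gb x0 \<noteq> 0" using gsplit[of x0 "x0 i"] by auto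
    then have AEab: "AE x in PiM I (\<lambda>_. M). ga x \<noteq> 0 \<or> gb x \<noteq> 0"
    proof
      assume "ga x0 \<noteq> 0"
      then have "AE x in PiM I (\<lambda>_. M). ga x \<noteq> 0"
        using insert.IH[THEN spec[where x=ga]] gadep gaaff gam by blast
      then show ?thesis by auto
    next
      assume "gb x0 \<noteq> 0"
      then have "AE x in PiM I (\<lambda>_. M). gb x \<noteq> 0"
        using insert.IH[THEN spec[where x=gb]] gbdep gbaff gbm by blast
      then show ?thesis by auto
    qed
    define Z where "Z = {x \<in> space (PiM (insert i I) (\<lambda>_. M)). g x = 0}"
    have Zs: "Z \<in> sets (PiM (insert i I) (\<lambda>_. M))"
      unfolding Z_def using meas by measurable
    have "emeasure (PiM (insert i I) (\<lambda>_. M)) Z = (\<integral>\<^sup>+ x. indicator Z x \<partial>PiM (insert i I) (\<lambda>_. M))"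
      using Zs by simp
    also have "\<dots> = (\<integral>\<^sup>+ x. (\<integral>\<^sup>+ y. indicator Z (x(i := y)) \<partial>M) \<partial>(PiM I (\<lambda>_. M)))"
      by (rule product_nn_integral_insert[OF insert(1,2)]) (use Zs in simp)
    also have "\<dots> = (\<integral>\<^sup>+ x. 0 \<partial>(PiM I (\<lambda>_. M)))"
    proof (rule nn_integral_cong_AE)
      show "AE x in PiM I (\<lambda>_. M). (\<integral>\<^sup>+ y. indicator Z (x(i := y)) \<partial>M) = 0"
        using AEab
      proof eventually_elim
        case (elim x)
        have "(\<integral>\<^sup>+ y. indicator Z (x(i := y)) \<partial>M) \<le> (\<integral>\<^sup>+ y. indicator {- ga x / gb x} y \<partial>M)"
        proof (rule nn_integral_mono)
          fix y
          show "indicator Z (x(i := y)) \<le> (indicator {- ga x / gb x} y :: ennreal)"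
          proof (cases "x(i:=y) \<in> Z")
            case True
            then have h: "ga x + y * gb x = 0" using gsplit[of x y] by (simp add: Z_def)
            then have nb: "gb x \<noteq> 0" using elim by auto
            from h have "y * gb x = - ga x" by linarith
            then have "y = - ga x / gb x" using nb by (simp add: field_simps)
            then show ?thesis by (simp add: indicator_def)
          qed simp
        qed
        also have "\<dots> = 0" using M(2,3) by simp
        finally show ?case by simp
      qed
    qed
    finally have "emeasure (PiM (insert i I) (\<lambda>_. M)) Z = 0" by simp
    then have "Z \<in> null_sets (PiM (insert i I) (\<lambda>_. M))" using Zs by auto
    then show "AE x in PiM (insert i I) (\<lambda>_. M). g x \<noteq> 0"
      by (rule AE_I') (auto simp: Z_def)
  qed
qed

lemma det_affine:
  fixes A :: "real \<Rightarrow> real mat"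
  assumes car: "\<And>t. A t \<in> carrier_mat n n" and k: "k < n"
    and rows: "\<And>t r c. r < n \<Longrightarrow> c < n \<Longrightarrow> r \<noteq> k \<Longrightarrow> A t $$ (r,c) = A 0 $$ (r,c)"
    and rowk: "\<And>t c. c < n \<Longrightarrow> A t $$ (k,c) = A 0 $$ (k,c) + t * (A 1 $$ (k,c) - A 0 $$ (k,c))"
  shows "det (A t) = det (A 0) + t * (det (A 1) - det (A 0))"
proof -
  have P: "(\<Prod>i = 0..<n. A s $$ (i, q i)) = A s $$ (k, q k) * (\<Prod>i\<in>{0..<n}-{k}. A 0 $$ (i, q i))"
    if "q permutes {0..<n}" for s q
  proof -
    have "(\<Prod>i = 0..<n. A s $$ (i, q i)) = A s $$ (k, q k) * (\<Prod>i\<in>{0..<n}-{k}. A s $$ (i, q i))"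
      using k by (simp add: prod.remove)
    also have "(\<Prod>i\<in>{0..<n}-{k}. A s $$ (i, q i)) = (\<Prod>i\<in>{0..<n}-{k}. A 0 $$ (i, q i))"
    proof (rule prod.cong[OF refl])
      fix i assume i: "i \<in> {0..<n}-{k}"
      then have "q i < n" using that by (simp add: permutes_in_image)
      then show "A s $$ (i,q i) = A 0 $$ (i, q i)" using i by (intro rows) auto
    qed
    finally show ?thesis .
  qed
  have Q: "A s $$ (k, q k) = A 0 $$ (k, q k) + s * (A 1 $$ (k, q k) - A 0 $$ (k, q k))"
    if "q permutes {0..<n}" for s q
  proof (rule rowk)
    show "q k < n" using that k by (simp add: permutes_in_image)
  qed
  let ?R = "\<lambda>q. (\<Prod>i\<in>{0..<n}-{k}. A 0 $$ (i, q i))"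
  have "det (A t) = (\<Sum>q\<in>{q. q permutes {0..<n}}. signof q * (A 0 $$ (k, q k) + t * (A 1 $$ (k, q k) - A 0 $$ (k, q k))) * ?R q)"
    unfolding det_def'[OF car]
  proof (rule sum.cong[OF refl])
    fix q assume "q \<in> {q. q permutes {0..<n}}"
    then have qp: "q permutes {0..<n}" by simp
    show "signof q * (\<Prod>i = 0..<n. A t $$ (i, q i)) = signof q * (A 0 $$ (k, q k) + t * (A 1 $$ (k, q k) - A 0 $$ (k, q k))) * ?R q"
      unfolding P[OF qp] Q[OF qp, of t] by (simp only: mult.assoc)
  qed
  also have "\<dots> = (\<Sum>q\<in>{q. q permutes {0..<n}}. signof q * A 0 $$ (k, q k) * ?R q)
      + t * ((\<Sum>q\<in>{q. q permutes {0..<n}}. signof q * A 1 $$ (k, q k) * ?R q)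
      - (\<Sum>q\<in>{q. q permutes {0..<n}}. signof q * A 0 $$ (k, q k) * ?R q))"
  proof -
    have e: "signof q * (A 0 $$ (k, q k) + t * (A 1 $$ (k, q k) - A 0 $$ (k, q k))) * ?R q
       = signof q * A 0 $$ (k, q k) * ?R q + t * (signof q * A 1 $$ (k, q k) * ?R q - signof q * A 0 $$ (k, q k) * ?R q)" for q
      by (simp add: algebra_simps)
    show ?thesis unfolding e sum.distrib sum_distrib_left[symmetric] sum_subtractf ..
  qed
  also have "(\<Sum>q\<in>{q. q permutes {0..<n}}. signof q * A 0 $$ (k, q k) * ?R q) = det (A 0)"
    unfolding det_def'[OF car] by (intro sum.cong) (auto simp: P)
  also have "(\<Sum>q\<in>{q. q permutes {0..<n}}. signof q * A 1 $$ (k, q k) * ?R q) = det (A 1)"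
    unfolding det_def'[OF car] by (intro sum.cong) (auto simp: P)
  finally show ?thesis .
qed

lemma det_ne0_invertible:
  fixes A :: "real mat"
  assumes "A \<in> carrier_mat n n" "det A \<noteq> 0"
  shows "invertible_mat A"
proof -
  have "A \<in> Units (ring_mat TYPE(real) n ())" by (rule det_non_zero_imp_unit[OF assms])
  then obtain B where B: "B \<in> carrier_mat n n" "B * A = 1\<^sub>m n" "A * B = 1\<^sub>m n"
    unfolding Units_def by (auto simp: ring_mat_simps)
  then show ?thesis using assms(1)
    unfolding invertible_mat_def inverts_mat_def by (auto intro!: exI[of _ B])
qed

lemma block_start_le: "i < N \<Longrightarrow> block_start p (Suc i) \<le> block_start p N"
  unfolding block_start_def by (rule sum_mono2) auto

lemma offdiag_bound: "(k,l) \<in> offdiag_pos N p \<Longrightarrow> k < block_start p N \<and> l < block_start p N"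
  unfolding offdiag_pos_def using block_start_le[of _ N p] by fastforce

lemma block_start_mono: "i \<le> j \<Longrightarrow> block_start p i \<le> block_start p j"
  unfolding block_start_def by (rule sum_mono2) auto

lemma offdiag_ne:
  assumes "(k,l) \<in> offdiag_pos N p" shows "k \<noteq> l"
proof -
  obtain i j where ij: "i \<noteq> j" and k: "k \<in> {block_start p i ..< block_start p (Suc i)}"
    and l: "l \<in> {block_start p j ..< block_start p (Suc j)}"
    using assms unfolding offdiag_pos_def by blast
  show ?thesis
  proof (cases "i < j")
    case True
    then have "block_start p (Suc i) \<le> block_start p j" by (intro block_start_mono) simp
    then show ?thesis using k l by simp
  next
    case False
    then have "block_start p (Suc j) \<le> block_start p i" using ij by (intro block_start_mono) simp
    then show ?thesis using k l by simp
  qed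
qed

lemma block_C_carrier: "block_C N p x \<in> carrier_mat (block_start p N) (block_start p N)"
  unfolding block_C_def block_K_def by (intro minus_carrier_mat) auto

lemma block_C_index: "r < block_start p N \<Longrightarrow> c < block_start p N \<Longrightarrow>
  block_C N p x $$ (r,c) = (if r = c then 1 else 0) - (if (r,c) \<in> offdiag_pos N p then x (r,c) else 0)"
  unfolding block_C_def block_K_def by simp

theorem proposition4:
  fixes \<mu> :: "real measure" and N :: nat and p :: "nat \<Rightarrow> nat"
  assumes "prob_space \<mu>"
    and "\<exists>f. f \<in> borel_measurable lborel \<and> \<mu> = density lborel f"
    and "N \<ge> 2"
    and "\<forall>i<N. p i \<ge> 1"
  shows "AE x in (\<Pi>\<^sub>M e\<in>offdiag_pos N p. \<mu>). invertible_mat (block_C N p x)"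
proof -
  obtain f where f: "f \<in> borel_measurable lborel" "\<mu> = density lborel f" using assms(2) by blast
  have smu: "sets \<mu> = sets borel" using f(2) by simp
  have atom: "emeasure \<mu> {a} = 0" for a
  proof -
    have "{a} \<in> null_sets lborel" by (simp add: null_sets_def)
    then show ?thesis using f by (simp add: emeasure_density nn_integral_null_set)
  qed
  define n where "n = block_start p N"
  define I where "I = offdiag_pos N p"
  have finI: "finite I"
  proof (rule finite_subset)
    show "I \<subseteq> {0..<n} \<times> {0..<n}" unfolding I_def n_def using offdiag_bound by fastforce
  qed auto
  define g where "g = (\<lambda>x. det (block_C N p x))"
  have dep: "\<forall>x y. (\<forall>i\<in>I. x i = y i) \<longrightarrow> g x = g y"
  proof (intro allI impI)
    fix x y :: "nat \<times> nat \<Rightarrow> real" assume "\<forall>i\<in>I. x i = y i"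
    then have "(\<lambda>(k, l). if (k, l) \<in> offdiag_pos N p then x (k, l) else 0)
             = (\<lambda>(k, l). if (k, l) \<in> offdiag_pos N p then y (k, l) else 0)"
      unfolding I_def by auto
    then show "g x = g y" unfolding g_def block_C_def block_K_def by simp
  qed
  have aff: "\<forall>e\<in>I. \<forall>x t. g (x(e:=t)) = g (x(e:=0)) + t * (g (x(e:=1)) - g (x(e:=0)))"
  proof (intro ballI allI)
    fix e x t assume e: "e \<in> I"
    obtain k l where kl: "e = (k,l)" by fastforce
    have eo: "(k,l) \<in> offdiag_pos N p" using e kl I_def by simp
    have k: "k < n" using offdiag_bound[OF eo] n_def by simp
    show "g (x(e:=t)) = g (x(e:=0)) + t * (g (x(e:=1)) - g (x(e:=0)))"
      unfolding g_def
    proof (rule det_affine[where A = "\<lambda>s. block_C N p (x(e:=s))"])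
      show "\<And>s. block_C N p (x(e:=s)) \<in> carrier_mat n n" using block_C_carrier n_def by simp
      show "k < n" by fact
      show "\<And>s r c. r < n \<Longrightarrow> c < n \<Longrightarrow> r \<noteq> k \<Longrightarrow>
          block_C N p (x(e:=s)) $$ (r,c) = block_C N p (x(e:=0)) $$ (r,c)"
        using block_C_index n_def kl by auto
      show "\<And>s c. c < n \<Longrightarrow> block_C N p (x(e:=s)) $$ (k,c) = block_C N p (x(e:=0)) $$ (k,c)
          + s * (block_C N p (x(e:=1)) $$ (k,c) - block_C N p (x(e:=0)) $$ (k,c))"
      proof -
        fix s c assume c: "c < n"
        have kl2: "k \<noteq> l" using offdiag_ne[OF eo] .
        show "block_C N p (x(e:=s)) $$ (k,c) = block_C N p (x(e:=0)) $$ (k,c)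
          + s * (block_C N p (x(e:=1)) $$ (k,c) - block_C N p (x(e:=0)) $$ (k,c))"
          using c k unfolding n_def kl
          by (cases "c = l") (auto simp: block_C_index eo kl2)
      qed
    qed
  qed
  have S: "sets (PiM I (\<lambda>_. \<mu>)) = sets (PiM I (\<lambda>_. borel))"
    by (rule sets_PiM_cong) (auto simp: smu)
  have BM: "borel_measurable (PiM I (\<lambda>_. \<mu>)) = borel_measurable (PiM I (\<lambda>_. borel))"
    by (rule measurable_cong_sets[OF S refl])
  have ent: "(\<lambda>x. block_C N p x $$ (r,c)) \<in> borel_measurable (PiM I (\<lambda>_. borel))"
    if "r < n" "c < n" for r c
  proof -
    have "(\<lambda>x. (if r = c then 1 else 0) - (if (r,c) \<in> I then x (r,c) else 0 :: real))
       \<in> borel_measurable (PiM I (\<lambda>_. borel))"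
    proof (cases "(r,c) \<in> I")
      case True
      have m: "(\<lambda>x. x (r,c)) \<in> borel_measurable (PiM I (\<lambda>_. borel))"
        using True by (rule measurable_component_singleton)
      have "(\<lambda>x. (if r = c then 1 else 0) - (if (r,c) \<in> I then x (r,c) else 0 :: real))
          = (\<lambda>x. (if r = c then 1 else 0) - x (r,c))" using True by simp
      then show ?thesis by (simp only:) (rule borel_measurable_diff[OF borel_measurable_const m])
    next
      case False
      then show ?thesis by simp
    qed
    note meas = this
    have eq: "(\<lambda>x. block_C N p x $$ (r,c)) = (\<lambda>x. (if r = c then 1 else 0) - (if (r,c) \<in> I then x (r,c) else 0))"
      using block_C_index[of r p N c] that by (simp add: n_def I_def)
    show ?thesis unfolding eq by (rule meas)
  qed
  have gm: "g \<in> borel_measurable (PiM I (\<lambda>_. \<mu>))"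
  proof -
    have "g = (\<lambda>x. \<Sum>q \<in> {q. q permutes {0..<n}}. signof q * (\<Prod>i = 0..<n. block_C N p x $$ (i, q i)))"
      unfolding g_def using det_def'[OF block_C_carrier] n_def by auto
    moreover have "(\<lambda>x. \<Sum>q \<in> {q. q permutes {0..<n}}. signof q * (\<Prod>i = 0..<n. block_C N p x $$ (i, q i)))
        \<in> borel_measurable (PiM I (\<lambda>_. borel))"
    proof (intro borel_measurable_sum borel_measurable_times borel_measurable_prod borel_measurable_const)
      fix q i assume "q \<in> {q. q permutes {0..<n}}" "i \<in> {0..<n}"
      then show "(\<lambda>x. block_C N p x $$ (i, q i)) \<in> borel_measurable (PiM I (\<lambda>_. borel))"
        by (intro ent) (auto simp: permutes_in_image)
    qed
    ultimately have "g \<in> borel_measurable (PiM I (\<lambda>_. borel))" by (simp only:)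
    then show ?thesis unfolding BM .
  qed
  have nz: "\<exists>x. g x \<noteq> 0"
  proof
    have "block_C N p (\<lambda>_. 0) = 1\<^sub>m n"
    proof (rule eq_matI)
      fix i j assume ij: "i < dim_row (1\<^sub>m n :: real mat)" "j < dim_col (1\<^sub>m n :: real mat)"
      then have "i < block_start p N" "j < block_start p N" by (simp_all add: n_def)
      then show "block_C N p (\<lambda>_. 0) $$ (i, j) = 1\<^sub>m n $$ (i, j)"
        using ij by (simp add: block_C_index)
    next
      show "dim_row (block_C N p (\<lambda>_. 0)) = dim_row (1\<^sub>m n :: real mat)"
        using block_C_carrier[of N p "\<lambda>_. 0"] by (simp add: n_def)
      show "dim_col (block_C N p (\<lambda>_. 0)) = dim_col (1\<^sub>m n :: real mat)"
        using block_C_carrier[of N p "\<lambda>_. 0"] by (simp add: n_def)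
    qed
    then show "g (\<lambda>_. 0) \<noteq> 0" unfolding g_def by simp
  qed
  have "AE x in PiM I (\<lambda>_. \<mu>). g x \<noteq> 0"
    using main[OF assms(1) smu atom finI] dep aff gm nz by blast
  then show ?thesis unfolding I_def g_def
    by (rule eventually_mono) (rule det_ne0_invertible[OF block_C_carrier])
qed

end
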